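(* For every tree $T$, $\varphi(T)=\varphi_r(T)$.
   Context: A proper $k$-coloring of $G$ is a surjective map $c:V(G)\to\{1,\ldots,k\}$ with $c(u)\ne c(v)$ for every edge $uv$. In a proper $k$-coloring, a vertex of color $i$ is a b-vertex if it has a neighbor of every color $j\ne i$. A b-$k$-coloring is a proper $k$-coloring in which every color class contains a b-vertex; $\varphi(G)$ is the largest $k$ such that $G$ has a b-$k$-coloring, and the b-relaxed number is $\varphi_r(G)=\max\{\varphi(H): H\text{ an induced subgraph of }G\}$. *)

theory Defs
  imports Main
begin

definition simple_graph :: "'a set \<Rightarrow> ('a \<Rightarrow> 'a \<Rightarrow> bool) \<Rightarrow> bool" where
  "simple_graph V E \<longleftrightarrow> finite V \<and> (\<forall>u v. E u v \<longrightarrow> E v u)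
     \<and> (\<forall>v. \<not> E v v) \<and> (\<forall>u v. E u v \<longrightarrow> u \<in> V \<and> v \<in> V)"

definition connected_graph :: "'a set \<Rightarrow> ('a \<Rightarrow> 'a \<Rightarrow> bool) \<Rightarrow> bool" where
  "connected_graph V E \<longleftrightarrow> V \<noteq> {} \<and>
     (\<forall>u\<in>V. \<forall>v\<in>V. (\<lambda>x y. x \<in> V \<and> y \<in> V \<and> E x y)\<^sup>*\<^sup>* u v)"

definition is_cycle :: "'a set \<Rightarrow> ('a \<Rightarrow> 'a \<Rightarrow> bool) \<Rightarrow> 'a list \<Rightarrow> bool" where
  "is_cycle V E xs \<longleftrightarrow> length xs \<ge> 3 \<and> distinct xs \<and> set xs \<subseteq> V
     \<and> (\<forall>i < length xs - 1. E (xs ! i) (xs ! Suc i)) \<and> E (last xs) (hd xs)"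

definition acyclic_graph :: "'a set \<Rightarrow> ('a \<Rightarrow> 'a \<Rightarrow> bool) \<Rightarrow> bool" where
  "acyclic_graph V E \<longleftrightarrow> (\<nexists>xs. is_cycle V E xs)"

definition tree :: "'a set \<Rightarrow> ('a \<Rightarrow> 'a \<Rightarrow> bool) \<Rightarrow> bool" where
  "tree V E \<longleftrightarrow> simple_graph V E \<and> connected_graph V E \<and> acyclic_graph V E"

definition proper_coloring :: "'a set \<Rightarrow> ('a \<Rightarrow> 'a \<Rightarrow> bool) \<Rightarrow> ('a \<Rightarrow> nat) \<Rightarrow> nat \<Rightarrow> bool" where
  "proper_coloring V E c k \<longleftrightarrow> c ` V = {1..k} \<and>
     (\<forall>u\<in>V. \<forall>v\<in>V. E u v \<longrightarrow> c u \<noteq> c v)"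

definition b_vertex :: "'a set \<Rightarrow> ('a \<Rightarrow> 'a \<Rightarrow> bool) \<Rightarrow> ('a \<Rightarrow> nat) \<Rightarrow> nat \<Rightarrow> 'a \<Rightarrow> bool" where
  "b_vertex V E c k v \<longleftrightarrow> v \<in> V \<and>
     (\<forall>j\<in>{1..k}. j \<noteq> c v \<longrightarrow> (\<exists>u\<in>V. E v u \<and> c u = j))"

definition b_coloring :: "'a set \<Rightarrow> ('a \<Rightarrow> 'a \<Rightarrow> bool) \<Rightarrow> ('a \<Rightarrow> nat) \<Rightarrow> nat \<Rightarrow> bool" where
  "b_coloring V E c k \<longleftrightarrow> proper_coloring V E c k \<and>
     (\<forall>i\<in>{1..k}. \<exists>v\<in>V. c v = i \<and> b_vertex V E c k v)"

definition b_chromatic :: "'a set \<Rightarrow> ('a \<Rightarrow> 'a \<Rightarrow> bool) \<Rightarrow> nat" where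
  "b_chromatic V E = Max {k. \<exists>c. b_coloring V E c k}"

text \<open>b-relaxed number: maximum of b-chromatic numbers over induced subgraphs
(the induced subgraph on S \<subseteq> V is the restriction of E to S).\<close>
definition b_relaxed :: "'a set \<Rightarrow> ('a \<Rightarrow> 'a \<Rightarrow> bool) \<Rightarrow> nat" where
  "b_relaxed V E = Max {b_chromatic S E | S. S \<subseteq> V}"

end

theory Submission
  imports Defs
begin


fun walk :: "('a \<Rightarrow> 'a \<Rightarrow> bool) \<Rightarrow> 'a list \<Rightarrow> bool" where
  "walk r [] = False"
| "walk r [a] = True"
| "walk r (a # b # p) = (r a b \<and> walk r (b # p))"

lemma walk_ConsD: "walk r (a # q) \<Longrightarrow> q \<noteq> [] \<Longrightarrow> walk r q"
  by (cases q) auto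

lemma walk_suffix: "walk r (p1 @ p2) \<Longrightarrow> p2 \<noteq> [] \<Longrightarrow> walk r p2"
  by (induction p1) (auto dest: walk_ConsD)

lemma walk_nth: "walk r p \<Longrightarrow> i < length p - 1 \<Longrightarrow> r (p ! i) (p ! Suc i)"
proof (induction r p arbitrary: i rule: walk.induct)
  case (3 r a b p)
  then show ?case by (cases i) auto
qed auto

lemma walk_set: "walk (\<lambda>a b. a \<in> S \<and> b \<in> S \<and> E a b) p \<Longrightarrow> length p \<ge> 2 \<Longrightarrow> set p \<subseteq> S"
proof (induction "\<lambda>a b. a \<in> S \<and> b \<in> S \<and> E a b" p rule: walk.induct)
  case (3 a b p)
  then show ?case by (cases p) auto
qed auto

lemma path_exists:
  assumes "r\<^sup>*\<^sup>* a b"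
  shows "\<exists>p. walk r p \<and> distinct p \<and> hd p = a \<and> last p = b"
  using assms
proof (induction rule: converse_rtranclp_induct)
  case base
  then show ?case by (rule exI[of _ "[b]"]) auto
next
  case (step a a')
  then obtain p where p: "walk r p" "distinct p" "hd p = a'" "last p = b" by blast
  have pne: "p \<noteq> []" using p(1) by auto
  show ?case
  proof (cases "a \<in> set p")
    case True
    then obtain p1 p2 where sp: "p = p1 @ a # p2" by (meson split_list)
    have "walk r (a # p2)" using walk_suffix[of r p1 "a # p2"] p(1) sp by simp
    moreover have "distinct (a # p2)" using p(2) sp by simp
    moreover have "last (a # p2) = b" using p(4) sp by (cases "p2 = []") auto
    ultimately show ?thesis by (intro exI[of _ "a # p2"]) auto
  next
    case False
    obtain q where q: "p = a' # q" using pne p(3) by (cases p) auto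
    have "walk r (a # p)" using q p(1) step(1) by simp
    then show ?thesis using False p pne by (intro exI[of _ "a # p"]) auto
  qed
qed



locale ext =
  fixes V S :: "'a set" and E :: "'a \<Rightarrow> 'a \<Rightarrow> bool" and x :: 'a and c :: "'a \<Rightarrow> nat" and k :: nat
  assumes symE: "\<And>u v. E u v \<Longrightarrow> E v u"
    and irrE: "\<And>v. \<not> E v v"
    and acyc: "\<nexists>xs. is_cycle V E xs"
    and SV: "S \<subseteq> V" and xV: "x \<in> V" and xS: "x \<notin> S"
    and bc: "b_coloring S E c k"
begin

definition R where "R a b \<longleftrightarrow> a \<in> S \<and> b \<in> S \<and> E a b"
definition comp where "comp y = {w. R\<^sup>*\<^sup>* y w}"

lemma R_sym: "R\<^sup>*\<^sup>* a b \<Longrightarrow> R\<^sup>*\<^sup>* b a"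
proof -
  have "symp R" unfolding symp_def R_def using symE by blast
  then show "R\<^sup>*\<^sup>* a b \<Longrightarrow> R\<^sup>*\<^sup>* b a" by (meson sympD symp_rtranclp)
qed

lemma comp_S: "y \<in> S \<Longrightarrow> w \<in> comp y \<Longrightarrow> w \<in> S"
  unfolding comp_def
proof -
  assume "y \<in> S" "w \<in> {w. R\<^sup>*\<^sup>* y w}"
  then have "R\<^sup>*\<^sup>* y w" by simp
  then show "w \<in> S" using \<open>y \<in> S\<close>
    by (induction rule: rtranclp_induct) (auto simp: R_def)
qed

lemma comp_self: "y \<in> comp y" unfolding comp_def by simp

lemma comp_closed: "y \<in> S \<Longrightarrow> w \<in> comp y \<Longrightarrow> z \<in> S \<Longrightarrow> E w z \<Longrightarrow> z \<in> comp y"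
proof -
  assume a: "y \<in> S" "w \<in> comp y" "z \<in> S" "E w z"
  have "w \<in> S" using comp_S a by blast
  then have "R w z" using a unfolding R_def by blast
  then show ?thesis using a(2) unfolding comp_def by (simp add: rtranclp.rtrancl_into_rtrancl)
qed

lemma comp_closed': "y \<in> S \<Longrightarrow> w \<in> comp y \<Longrightarrow> z \<in> S \<Longrightarrow> E z w \<Longrightarrow> z \<in> comp y"
  by (rule comp_closed, assumption+, rule symE)

lemma K3:
  assumes "y \<in> S" "y' \<in> S" "E x y" "E x y'" "y \<noteq> y'"
  shows "\<not> R\<^sup>*\<^sup>* y y'"
proof
  assume "R\<^sup>*\<^sup>* y y'"
  then have "\<exists>p. walk R p \<and> distinct p \<and> hd p = y \<and> last p = y'" by (rule path_exists)
  then obtain p where p: "walk R p" "distinct p" "hd p = y" "last p = y'"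
    by blast
  have pne: "p \<noteq> []" using p(1) by auto
  have len: "length p \<ge> 2"
  proof (rule ccontr)
    assume "\<not> length p \<ge> 2"
    then have "length p = 1" using pne length_greater_0_conv[of p] by linarith
    then obtain a where "p = [a]" by (auto simp: length_Suc_conv)
    then show False using p assms(5) by simp
  qed
  have RS: "R = (\<lambda>a b. a \<in> S \<and> b \<in> S \<and> E a b)" unfolding R_def by (intro ext) simp
  have setp: "set p \<subseteq> S" using walk_set[of S E p] p(1) len RS by simp
  have "is_cycle V E (x # p)"
    unfolding is_cycle_def
  proof (intro conjI)
    show "3 \<le> length (x # p)" using len by simp
    show "distinct (x # p)" using p(2) setp xS by auto
    show "set (x # p) \<subseteq> V" using setp SV xV by auto
    show "\<forall>i<length (x # p) - 1. E ((x # p) ! i) ((x # p) ! Suc i)"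
    proof (intro allI impI)
      fix i assume i: "i < length (x # p) - 1"
      show "E ((x # p) ! i) ((x # p) ! Suc i)"
      proof (cases i)
        case 0
        then show ?thesis using assms(3) p(3) pne by (simp add: hd_conv_nth)
      next
        case (Suc j)
        then have "R (p ! j) (p ! Suc j)" using walk_nth[OF p(1)] i by simp
        then show ?thesis using Suc unfolding R_def by simp
      qed
    qed
    have "E y' x" using assms(4) by (rule symE)
    then show "E (last (x # p)) (hd (x # p))" using p(4) pne by simp
  qed
  then show False using acyc by blast
qed

lemma comp_disj:
  assumes "y \<in> S" "y' \<in> S" "E x y" "E x y'" "y \<noteq> y'" "w \<in> comp y"
  shows "w \<notin> comp y'"
proof
  assume "w \<in> comp y'"
  then have "R\<^sup>*\<^sup>* y w" "R\<^sup>*\<^sup>* y' w" using assms(6) unfolding comp_def by auto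
  then have "R\<^sup>*\<^sup>* y y'" using R_sym by (meson rtranclp_trans)
  then show False using K3 assms by blast
qed

definition Y where "Y t = {y \<in> S. E x y \<and> c y = t}"
definition inC where "inC t w \<longleftrightarrow> (\<exists>y\<in>Y t. w \<in> comp y)"
definition own where "own t w = (SOME y. y \<in> Y t \<and> w \<in> comp y)"
definition sw :: "nat \<Rightarrow> nat \<Rightarrow> nat \<Rightarrow> nat" where
  "sw t v a = (if a = t then v else if a = v then t else a)"
definition newc where
  "newc t u w = (if w = x then t else if inC t w then sw t (u (own t w)) (c w) else c w)"

lemma sw_inv: "sw t v (sw t v a) = a" unfolding sw_def by auto

lemma own_eq: assumes "y \<in> Y t" "w \<in> comp y" shows "own t w = y"
proof -
  have ex: "\<exists>y. y \<in> Y t \<and> w \<in> comp y" using assms by blast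
  have o: "own t w \<in> Y t" "w \<in> comp (own t w)"
    using someI_ex[OF ex] unfolding own_def by auto
  show ?thesis
  proof (rule ccontr)
    assume "own t w \<noteq> y"
    then show False using comp_disj[of y "own t w" w] assms o unfolding Y_def by auto
  qed
qed

lemma newc_in: assumes "y \<in> Y t" "w \<in> comp y" shows "newc t u w = sw t (u y) (c w)"
proof -
  have "w \<in> S" using comp_S assms unfolding Y_def by blast
  then show ?thesis using assms own_eq xS unfolding newc_def inC_def by auto
qed

lemma newc_out: assumes "w \<in> S" "\<not> inC t w" shows "newc t u w = c w"
  using assms xS unfolding newc_def by auto

lemma newc_x: "newc t u x = t" unfolding newc_def by simp


lemma c_range: "w \<in> S \<Longrightarrow> c w \<in> {1..k}"
  using bc unfolding b_coloring_def proper_coloring_def by blast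

lemma c_proper: "w \<in> S \<Longrightarrow> z \<in> S \<Longrightarrow> E w z \<Longrightarrow> c w \<noteq> c z"
  using bc unfolding b_coloring_def proper_coloring_def by blast

lemma c_bv: "i \<in> {1..k} \<Longrightarrow> \<exists>v\<in>S. c v = i \<and> b_vertex S E c k v"
  using bc unfolding b_coloring_def by blast

lemma sw_range: "a \<in> {1..k} \<Longrightarrow> t \<in> {1..k} \<Longrightarrow> v \<in> {1..k} \<Longrightarrow> sw t v a \<in> {1..k}"
  unfolding sw_def by auto

lemma Y_S: "y \<in> Y t \<Longrightarrow> y \<in> S" unfolding Y_def by simp

lemma notinC_nb:
  assumes "w \<in> S" "\<not> inC t w" "z \<in> S" "E w z" shows "\<not> inC t z"
proof
  assume "inC t z"
  then obtain y where y: "y \<in> Y t" "z \<in> comp y" unfolding inC_def by blast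
  then have "w \<in> comp y" using comp_closed'[of y z w] Y_S assms by blast
  then show False using assms(2) y(1) unfolding inC_def by blast
qed

lemma N_notY:
  assumes "z \<in> S" "E x z" "c z \<noteq> t" shows "\<not> inC t z"
proof
  assume "inC t z"
  then obtain y where y: "y \<in> Y t" "z \<in> comp y" unfolding inC_def by blast
  have "y \<noteq> z" using y(1) assms(3) unfolding Y_def by auto
  moreover have "y \<in> S" "E x y" using y(1) unfolding Y_def by auto
  ultimately have "\<not> R\<^sup>*\<^sup>* y z" using K3 assms by blast
  then show False using y(2) unfolding comp_def by simp
qed

context
  fixes t :: nat and u :: "'a \<Rightarrow> nat"
  assumes tk: "t \<in> {1..k}" and hu: "\<And>y. y \<in> Y t \<Longrightarrow> u y \<in> {1..k} \<and> u y \<noteq> t"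
begin

lemma newc_range: "w \<in> insert x S \<Longrightarrow> newc t u w \<in> {1..k}"
proof -
  assume w: "w \<in> insert x S"
  show ?thesis
  proof (cases "w = x")
    case True then show ?thesis using tk newc_x by simp
  next
    case False
    then have wS: "w \<in> S" using w by simp
    show ?thesis
    proof (cases "inC t w")
      case True
      then obtain y where y: "y \<in> Y t" "w \<in> comp y" unfolding inC_def by blast
      then show ?thesis using newc_in[OF y] sw_range c_range[OF wS] tk hu[OF y(1)] by simp
    next
      case False
      then show ?thesis using newc_out[OF wS False] c_range[OF wS] by simp
    qed
  qed
qed

lemma newc_N: assumes "z \<in> S" "E x z" shows "newc t u z \<noteq> t"
proof (cases "c z = t")
  case True
  then have y: "z \<in> Y t" using assms unfolding Y_def by simp
  have "newc t u z = sw t (u z) (c z)" using newc_in[OF y comp_self] .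
  also have "\<dots> = u z" using True unfolding sw_def by simp
  finally show ?thesis using hu[OF y] by simp
next
  case False
  then show ?thesis using newc_out[OF assms(1) N_notY[OF assms False]] by simp
qed

lemma newc_proper:
  assumes "w \<in> insert x S" "z \<in> insert x S" "E w z" shows "newc t u w \<noteq> newc t u z"
proof -
  have nl: "w \<noteq> z" using assms(3) irrE by metis
  show ?thesis
  proof (cases "w = x")
    case True
    then have "z \<in> S" "E x z" using assms nl by auto
    then show ?thesis using newc_N True newc_x by metis
  next
    case wx: False
    then have wS: "w \<in> S" using assms by simp
    show ?thesis
    proof (cases "z = x")
      case True
      then have "E x w" using assms(3) symE by metis
      then show ?thesis using newc_N[OF wS] True newc_x by metis
    next
      case False
      then have zS: "z \<in> S" using assms by simp
      have cd: "c w \<noteq> c z" using c_proper[OF wS zS assms(3)] .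
      show ?thesis
      proof (cases "inC t w")
        case True
        then obtain y where y: "y \<in> Y t" "w \<in> comp y" unfolding inC_def by blast
        have z: "z \<in> comp y" using comp_closed[OF Y_S[OF y(1)] y(2) zS assms(3)] .
        show ?thesis using newc_in[OF y] newc_in[OF y(1) z] cd sw_inv by metis
      next
        case False
        then show ?thesis using newc_out[OF wS False] newc_out[OF zS notinC_nb[OF wS False zS assms(3)]] cd
          by simp
      qed
    qed
  qed
qed

lemma newc_bx:
  assumes H: "\<And>j. j \<in> {1..k} \<Longrightarrow> j \<noteq> t \<Longrightarrow> \<exists>y\<in>S. E x y \<and> c y = j"
  shows "b_vertex (insert x S) E (newc t u) k x"
  unfolding b_vertex_def
proof (intro conjI ballI impI)
  show "x \<in> insert x S" by simp
  fix j assume j: "j \<in> {1..k}" "j \<noteq> newc t u x"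
  then have "j \<noteq> t" using newc_x by simp
  then obtain y where y: "y \<in> S" "E x y" "c y = j" using H j(1) by blast
  have "newc t u y = j" using newc_out[OF y(1) N_notY[OF y(1) y(2)]] y(3) \<open>j \<noteq> t\<close> by simp
  then show "\<exists>z\<in>insert x S. E x z \<and> newc t u z = j" using y by blast
qed

lemma newc_bold:
  assumes v: "v \<in> S" "b_vertex S E c k v"
  shows "b_vertex (insert x S) E (newc t u) k v"
  unfolding b_vertex_def
proof (intro conjI ballI impI)
  show "v \<in> insert x S" using v by simp
  fix j assume j: "j \<in> {1..k}" "j \<noteq> newc t u v"
  show "\<exists>z\<in>insert x S. E v z \<and> newc t u z = j"
  proof (cases "inC t v")
    case True
    then obtain y where y: "y \<in> Y t" "v \<in> comp y" unfolding inC_def by blast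
    define j0 where "j0 = sw t (u y) j"
    have j0k: "j0 \<in> {1..k}" unfolding j0_def using sw_range j(1) tk hu[OF y(1)] by simp
    have "j0 \<noteq> c v" using j(2) newc_in[OF y] sw_inv unfolding j0_def by metis
    then obtain z where z: "z \<in> S" "E v z" "c z = j0"
      using v(2) j0k unfolding b_vertex_def by blast
    have zc: "z \<in> comp y" using comp_closed[OF Y_S[OF y(1)] y(2) z(1) z(2)] .
    have "newc t u z = j" using newc_in[OF y(1) zc] z(3) sw_inv unfolding j0_def by metis
    then show ?thesis using z by blast
  next
    case False
    then have "j \<noteq> c v" using j(2) newc_out[OF v(1)] by simp
    then obtain z where z: "z \<in> S" "E v z" "c z = j"
      using v(2) j(1) unfolding b_vertex_def by blast
    have "newc t u z = j" using newc_out[OF z(1) notinC_nb[OF v(1) False z(1) z(2)]] z(3) by simp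
    then show ?thesis using z by blast
  qed
qed

end


lemma assemble:
  assumes "\<And>w. w \<in> A \<Longrightarrow> f w \<in> {1..k}"
    and "\<And>w z. w \<in> A \<Longrightarrow> z \<in> A \<Longrightarrow> E w z \<Longrightarrow> f w \<noteq> f z"
    and "\<And>i. i \<in> {1..k} \<Longrightarrow> \<exists>v\<in>A. f v = i \<and> b_vertex A E f k v"
  shows "b_coloring A E f k"
proof -
  have "f ` A = {1..k}"
  proof
    show "f ` A \<subseteq> {1..k}" using assms(1) by blast
    show "{1..k} \<subseteq> f ` A" using assms(3) by force
  qed
  then show ?thesis unfolding b_coloring_def proper_coloring_def using assms by blast
qed

lemma finish:
  assumes tk: "t \<in> {1..k}" and hu: "\<And>y. y \<in> Y t \<Longrightarrow> u y \<in> {1..k} \<and> u y \<noteq> t"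
    and H: "\<And>j. j \<in> {1..k} \<Longrightarrow> j \<noteq> t \<Longrightarrow> \<exists>y\<in>S. E x y \<and> c y = j"
    and cov: "\<And>i. i \<in> {1..k} \<Longrightarrow> i \<noteq> t \<Longrightarrow>
       \<exists>v\<in>insert x S. newc t u v = i \<and> b_vertex (insert x S) E (newc t u) k v"
  shows "\<exists>c'. b_coloring (insert x S) E c' k"
proof (intro exI assemble)
  show "\<And>w. w \<in> insert x S \<Longrightarrow> newc t u w \<in> {1..k}" using newc_range[where t=t and u=u, OF tk hu] by blast
  show "\<And>w z. w \<in> insert x S \<Longrightarrow> z \<in> insert x S \<Longrightarrow> E w z \<Longrightarrow> newc t u w \<noteq> newc t u z"
    using newc_proper[where t=t and u=u, OF tk hu] by blast
  fix i assume i: "i \<in> {1..k}"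
  show "\<exists>v\<in>insert x S. newc t u v = i \<and> b_vertex (insert x S) E (newc t u) k v"
  proof (cases "i = t")
    case True
    then show ?thesis using newc_x newc_bx[where t=t and u=u, OF tk hu H] by blast
  next
    case False
    then show ?thesis using cov i by blast
  qed
qed

definition B where "B y = {i. \<exists>v\<in>comp y. v \<in> S \<and> b_vertex S E c k v \<and> c v = i}"

lemma extend:
  assumes k2: "k \<ge> 2" shows "\<exists>c'. b_coloring (insert x S) E c' k"
proof (cases "\<exists>t\<in>{1..k}. \<forall>y\<in>S. E x y \<longrightarrow> c y \<noteq> t")
  case True
  then obtain t where t: "t \<in> {1..k}" "\<And>y. y \<in> S \<Longrightarrow> E x y \<Longrightarrow> c y \<noteq> t" by blast
  show ?thesis
  proof (intro exI assemble)
    fix w assume "w \<in> insert x S"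
    then show "(c(x := t)) w \<in> {1..k}" using t c_range by auto
  next
    fix w z assume wz: "w \<in> insert x S" "z \<in> insert x S" "E w z"
    have nl: "w \<noteq> z" using wz(3) irrE by metis
    show "(c(x := t)) w \<noteq> (c(x := t)) z"
    proof (cases "w = x")
      case True
      then show ?thesis using wz nl t(2) by auto
    next
      case False
      note wx = this
      show ?thesis
      proof (cases "z = x")
        case True
        then have "E x w" using wz(3) symE by metis
        then show ?thesis using wz True wx t(2) by auto
      next
        case False
        then show ?thesis using wz wx c_proper by auto
      qed
    qed
  next
    fix i assume i: "i \<in> {1..k}"
    obtain v where v: "v \<in> S" "c v = i" "b_vertex S E c k v" using c_bv[OF i] by blast
    have vx: "v \<noteq> x" using v xS by auto
    have "b_vertex (insert x S) E (c(x := t)) k v"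
      unfolding b_vertex_def
    proof (intro conjI ballI impI)
      show "v \<in> insert x S" using v by simp
      fix j assume j: "j \<in> {1..k}" "j \<noteq> (c(x := t)) v"
      then obtain z where "z \<in> S" "E v z" "c z = j" using v(3) vx unfolding b_vertex_def by auto
      then show "\<exists>z\<in>insert x S. E v z \<and> (c(x := t)) z = j" using xS by (intro bexI[of _ z]) auto
    qed
    then show "\<exists>v\<in>insert x S. (c(x := t)) v = i \<and> b_vertex (insert x S) E (c(x := t)) k v"
      using v vx by (intro bexI[of _ v]) auto
  qed
next
  case False
  then have H: "\<And>j. j \<in> {1..k} \<Longrightarrow> \<exists>y\<in>S. E x y \<and> c y = j" by blast
  show ?thesis
  proof (cases "k = 2")
    case True
    define u :: "'a \<Rightarrow> nat" where "u = (\<lambda>_. 2)"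
    have tk: "(1::nat) \<in> {1..k}" using k2 by simp
    have hu: "\<And>y. y \<in> Y 1 \<Longrightarrow> u y \<in> {1..k} \<and> u y \<noteq> 1" using True unfolding u_def by simp
    show ?thesis
    proof (rule finish[OF tk hu])
      show "\<And>j. j \<in> {1..k} \<Longrightarrow> j \<noteq> 1 \<Longrightarrow> \<exists>y\<in>S. E x y \<and> c y = j" using H by blast
      fix i assume i: "i \<in> {1..k}" "i \<noteq> 1"
      then have i2: "i = 2" using True by auto
      obtain y where y: "y \<in> S" "E x y" using H[OF tk] by blast
      have "newc 1 u y \<in> {1..k}" using newc_range[where t=1 and u=u, OF tk hu] y by simp
      moreover have "newc 1 u y \<noteq> 1" using newc_N[where t=1 and u=u, OF tk hu y] .
      ultimately have ny: "newc 1 u y = 2" using True by auto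
      have "b_vertex (insert x S) E (newc 1 u) k y"
        unfolding b_vertex_def
      proof (intro conjI ballI impI)
        show "y \<in> insert x S" using y by simp
        fix j assume "j \<in> {1..k}" "j \<noteq> newc 1 u y"
        then have "j = 1" using True ny by auto
        moreover have "E y x" using y(2) symE by metis
        ultimately show "\<exists>z\<in>insert x S. E y z \<and> newc 1 u z = j" using newc_x by blast
      qed
      then show "\<exists>v\<in>insert x S. newc 1 u v = i \<and> b_vertex (insert x S) E (newc 1 u) k v"
        using ny i2 y by blast
    qed
  next
    case False
    then have k3: "k \<ge> 3" using k2 by simp
    show ?thesis
    proof (cases "\<exists>t\<in>{1..k}. \<forall>y\<in>Y t. \<exists>w\<in>{1..k}. w \<noteq> t \<and> w \<notin> B y")
      case True
      then obtain t where tk: "t \<in> {1..k}" and tw: "\<And>y. y \<in> Y t \<Longrightarrow> \<exists>w\<in>{1..k}. w \<noteq> t \<and> w \<notin> B y"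
        by blast
      define u where "u = (\<lambda>y. SOME w. w \<in> {1..k} \<and> w \<noteq> t \<and> w \<notin> B y)"
      have hu3: "u y \<in> {1..k} \<and> u y \<noteq> t \<and> u y \<notin> B y" if "y \<in> Y t" for y
        using someI_ex[of "\<lambda>w. w \<in> {1..k} \<and> w \<noteq> t \<and> w \<notin> B y"] tw[OF that] unfolding u_def by blast
      then have hu: "\<And>y. y \<in> Y t \<Longrightarrow> u y \<in> {1..k} \<and> u y \<noteq> t" by blast
      show ?thesis
      proof (rule finish[OF tk hu])
        show "\<And>j. j \<in> {1..k} \<Longrightarrow> j \<noteq> t \<Longrightarrow> \<exists>y\<in>S. E x y \<and> c y = j" using H by blast
        fix i assume i: "i \<in> {1..k}" "i \<noteq> t"
        obtain v where v: "v \<in> S" "c v = i" "b_vertex S E c k v" using c_bv[OF i(1)] by blast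
        have "newc t u v = i"
        proof (cases "inC t v")
          case True
          then obtain y where y: "y \<in> Y t" "v \<in> comp y" unfolding inC_def by blast
          have "i \<in> B y" using v y(2) unfolding B_def by blast
          then have "i \<noteq> u y" using hu3[OF y(1)] by blast
          then show ?thesis using newc_in[OF y] v(2) i(2) unfolding sw_def by simp
        next
          case False
          then show ?thesis using newc_out[OF v(1)] v(2) by simp
        qed
        then show "\<exists>v\<in>insert x S. newc t u v = i \<and> b_vertex (insert x S) E (newc t u) k v"
          using newc_bold[where t=t and u=u, OF tk hu v(1) v(3)] v(1) by blast
      qed
    next
      case False
      then have Bf: "\<And>t. t \<in> {1..k} \<Longrightarrow> \<exists>y\<in>Y t. \<forall>w\<in>{1..k}. w \<noteq> t \<longrightarrow> w \<in> B y" by blast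
      define u :: "'a \<Rightarrow> nat" where "u = (\<lambda>_. 3)"
      have tk: "(1::nat) \<in> {1..k}" using k3 by simp
      have hu: "\<And>y. y \<in> Y 1 \<Longrightarrow> u y \<in> {1..k} \<and> u y \<noteq> 1" using k3 unfolding u_def by simp
      obtain y1 where y1: "y1 \<in> Y 1" "\<And>w. w \<in> {1..k} \<Longrightarrow> w \<noteq> 1 \<Longrightarrow> w \<in> B y1" using Bf[OF tk] by blast
      obtain y2 where y2: "y2 \<in> Y 2" "\<And>w. w \<in> {1..k} \<Longrightarrow> w \<noteq> 2 \<Longrightarrow> w \<in> B y2"
        using Bf[of 2] k3 by auto
      show ?thesis
      proof (rule finish[OF tk hu])
        show "\<And>j. j \<in> {1..k} \<Longrightarrow> j \<noteq> 1 \<Longrightarrow> \<exists>y\<in>S. E x y \<and> c y = j" using H by blast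
        fix i assume i: "i \<in> {1..k}" "i \<noteq> 1"
        show "\<exists>v\<in>insert x S. newc 1 u v = i \<and> b_vertex (insert x S) E (newc 1 u) k v"
        proof (cases "i = 2")
          case True
          have "2 \<in> B y1" using y1(2) k3 by simp
          then obtain v where v: "v \<in> comp y1" "v \<in> S" "b_vertex S E c k v" "c v = 2"
            unfolding B_def by blast
          have "newc 1 u v = 2" using newc_in[OF y1(1) v(1)] v(4) unfolding sw_def u_def by simp
          then show ?thesis using True newc_bold[where t=1 and u=u, OF tk hu v(2) v(3)] v(2) by blast
        next
          case False
          have "i \<in> B y2" using y2(2) i False by simp
          then obtain v where v: "v \<in> comp y2" "v \<in> S" "b_vertex S E c k v" "c v = i"
            unfolding B_def by blast
          have "\<not> inC 1 v"
          proof
            assume "inC 1 v"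
            then obtain y where y: "y \<in> Y 1" "v \<in> comp y" unfolding inC_def by blast
            have "y \<noteq> y2" using y(1) y2(1) unfolding Y_def by auto
            then have "v \<notin> comp y2" using comp_disj[of y y2 v] y y2(1) unfolding Y_def by blast
            then show False using v(1) by blast
          qed
          then have "newc 1 u v = i" using newc_out[OF v(2)] v(4) by simp
          then show ?thesis using newc_bold[where t=1 and u=u, OF tk hu v(2) v(3)] v(2) by blast
        qed
      qed
    qed
  qed
qed

end


lemma grow:
  assumes fin: "finite V" and symE: "\<And>u v. E u v \<Longrightarrow> E v u" and irrE: "\<And>v. \<not> E v v"
    and acyc: "\<nexists>xs. is_cycle V E xs" and BV: "B \<subseteq> V" and k2: "k \<ge> 2"
  shows "A \<subseteq> B \<Longrightarrow> b_coloring A E c k \<Longrightarrow> \<exists>c'. b_coloring B E c' k"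
proof (induction "card (B - A)" arbitrary: A c)
  case 0
  have "finite B" using fin BV finite_subset by blast
  then have "A = B" using 0 by auto
  then show ?case using 0 by blast
next
  case (Suc n)
  have finB: "finite B" using fin BV finite_subset by blast
  obtain x where x: "x \<in> B" "x \<notin> A" using Suc(2) by (metis Diff_eq_empty_iff card.empty nat.simps(3) subsetI)
  interpret ext V A E x c k
    using symE irrE acyc Suc(3) BV x Suc(4) by unfold_locales auto
  obtain c' where c': "b_coloring (insert x A) E c' k" using extend k2 by blast
  have "card (B - insert x A) = n"
    using Suc(2) x finB by (metis Diff_insert card_Diff_singleton diff_Suc_1 finite_Diff DiffI)
  then show ?case using Suc(1)[of "insert x A" c'] c' x Suc(3) by blast
qed

lemma kset_fin: "finite S \<Longrightarrow> finite {k. \<exists>c. b_coloring S E c k}"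
proof -
  assume fS: "finite S"
  have "{k. \<exists>c. b_coloring S E c k} \<subseteq> {..card S}"
  proof
    fix k assume "k \<in> {k. \<exists>c. b_coloring S E c k}"
    then obtain c where "c ` S = {1..k}" unfolding b_coloring_def proper_coloring_def by blast
    then have "card {1..k} \<le> card S" using card_image_le[OF fS, of c] by simp
    then show "k \<in> {..card S}" by simp
  qed
  then show ?thesis using finite_subset by blast
qed

lemma tree_facts:
  assumes "tree V E"
  shows "finite V" "\<And>u v. E u v \<Longrightarrow> E v u" "\<And>v. \<not> E v v" "\<nexists>xs. is_cycle V E xs" "V \<noteq> {}"
  using assms unfolding tree_def simple_graph_def connected_graph_def acyclic_graph_def by auto

lemma kset_ne:
  assumes T: "tree V E" and SV: "S \<subseteq> V"
  shows "\<exists>k c. b_coloring S E c k \<and> (S \<noteq> {} \<longrightarrow> k \<ge> 1)"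
proof (cases "S = {}")
  case True
  have "b_coloring S E (\<lambda>_. 0) 0" using True unfolding b_coloring_def proper_coloring_def by simp
  then show ?thesis using True by blast
next
  case ne: False
  show ?thesis
  proof (cases "\<exists>a\<in>S. \<exists>b\<in>S. E a b")
    case False
    have "b_coloring S E (\<lambda>_. 1) 1"
      unfolding b_coloring_def proper_coloring_def b_vertex_def using False ne by auto
    then show ?thesis by blast
  next
    case True
    then obtain a b where ab: "a \<in> S" "b \<in> S" "E a b" by blast
    have ne': "a \<noteq> b" using ab(3) tree_facts(3)[OF T] by metis
    have Eba: "E b a" using ab(3) tree_facts(2)[OF T] by metis
    define c0 where "c0 = (\<lambda>w. if w = a then 1 else (2::nat))"
    have "b_coloring {a, b} E c0 2"
    proof -
      have "c0 ` {a, b} = {1..2}" using ne' unfolding c0_def by auto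
      moreover have "\<forall>u\<in>{a, b}. \<forall>v\<in>{a, b}. E u v \<longrightarrow> c0 u \<noteq> c0 v"
        using tree_facts(3)[OF T] ne' unfolding c0_def by auto
      moreover have "b_vertex {a, b} E c0 2 a" unfolding b_vertex_def c0_def using ab(3) ne' by auto
      moreover have "b_vertex {a, b} E c0 2 b" unfolding b_vertex_def c0_def using Eba ne' by auto
      moreover have "\<forall>i\<in>{1..2::nat}. i = 1 \<or> i = 2" by auto
      ultimately show ?thesis unfolding b_coloring_def proper_coloring_def c0_def using ne'
        by (metis (no_types, lifting) insertCI)
    qed
    then obtain c' where "b_coloring S E c' 2"
      using grow[OF tree_facts(1-4)[OF T] SV, of 2 "{a,b}" c0] ab by auto
    then show ?thesis by auto
  qed
qed

theorem mainTheorem18: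
  fixes V :: "'a set" and E :: "'a \<Rightarrow> 'a \<Rightarrow> bool"
  assumes "tree V E"
  shows "b_chromatic V E = b_relaxed V E"
proof -
  note tf = tree_facts[OF assms]
  define K where "K S = {k. \<exists>c. b_coloring S E c k}" for S
  have finK: "finite (K S)" if SV: "S \<subseteq> V" for S
    unfolding K_def by (rule kset_fin, rule finite_subset[OF SV tf(1)])
  have neK: "K S \<noteq> {}" if SV: "S \<subseteq> V" for S
  proof -
    obtain k c where "b_coloring S E c k" using kset_ne[OF assms SV] by blast
    then show ?thesis unfolding K_def by blast
  qed
  obtain k1 c1 where k1: "b_coloring V E c1 k1" "k1 \<ge> 1" using kset_ne[OF assms, of V] tf(5) by blast
  have "k1 \<in> K V" using k1(1) unfolding K_def by blast
  then have "k1 \<le> Max (K V)" by (rule Max_ge[OF finK[OF order_refl]])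
  then have MV: "Max (K V) \<ge> 1" using k1(2) by linarith
  have le: "b_chromatic S E \<le> b_chromatic V E" if SV: "S \<subseteq> V" for S
  proof -
    have bS: "b_chromatic S E = Max (K S)" "b_chromatic V E = Max (K V)"
      unfolding b_chromatic_def K_def by simp_all
    have "Max (K S) \<in> K S" using Max_in finK[OF SV] neK[OF SV] by blast
    then obtain c where c: "b_coloring S E c (Max (K S))" unfolding K_def by blast
    show ?thesis
    proof (cases "Max (K S) \<ge> 2")
      case True
      then obtain c' where "b_coloring V E c' (Max (K S))"
        using grow[OF tf(1-4) order_refl True SV c] by blast
      then have "Max (K S) \<in> K V" unfolding K_def by blast
      then have "Max (K S) \<le> Max (K V)" by (rule Max_ge[OF finK[OF order_refl]])
      then show ?thesis using bS by simp
    next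
      case False
      then show ?thesis using bS MV by simp
    qed
  qed
  have "Max {b_chromatic S E | S. S \<subseteq> V} = b_chromatic V E"
  proof (rule Max_eqI)
    have "{b_chromatic S E | S. S \<subseteq> V} = (\<lambda>S. b_chromatic S E) ` Pow V" by auto
    then show "finite {b_chromatic S E | S. S \<subseteq> V}" using tf(1) by simp
    show "\<And>y. y \<in> {b_chromatic S E | S. S \<subseteq> V} \<Longrightarrow> y \<le> b_chromatic V E" proof -
      fix y assume "y \<in> {b_chromatic S E | S. S \<subseteq> V}"
      then obtain S where "S \<subseteq> V" "y = b_chromatic S E" by blast
      then show "y \<le> b_chromatic V E" using le by simp
    qed
    show "b_chromatic V E \<in> {b_chromatic S E | S. S \<subseteq> V}" by blast
  qed
  then show ?thesis unfolding b_relaxed_def by simp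
qed

end
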